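(* If $M\to_{\beta\mu}N$ and $\Gamma\vdash M:\delta\mid\Delta$ is derivable in the intersection type assignment system, then $\Gamma\vdash N:\delta\mid\Delta$ is derivable.
   Context: $\lambda\mu$ terms and commands: $M::=x\mid\lambda x.M\mid MN\mid\mu\alpha.\mathsf C$ and $\mathsf C::=[\alpha]M$. Structural substitution $T[\alpha\Leftarrow L]$ replaces, recursively, every subterm $[\alpha]N$ by $[\alpha](N[\alpha\Leftarrow L])L$. $\to_{\beta\mu}$ is the compatible closure of: - $(\lambda x.M)N\to M[N/x]$; - $(\mu\alpha.\mathsf C)N\to\mu\alpha.\mathsf C[\alpha\Leftarrow N]$; - $[\alpha]\mu\beta.\mathsf C\to\mathsf C[\alpha/\beta]$. Types (for a fixed $\omega$-algebraic lattice $R$): - $\Lambda_R$: $\rho::=\psi_a\mid\omega\mid\rho\wedge\rho$; - $\Lambda_D$: $\delta::=\rho\mid\kappa\to\rho\mid\omega\mid\delta\wedge\delta$; - $\Lambda_C$: $\kappa::=\delta\times\kappa\mid\omega\mid\kappa\wedge\kappa$. The relations $\le_R,\le_D,\le_C$ are the least reflexive, transitive relations with $\sigma\wedge\tau\le\sigma,\tau$, $\sigma\le\omega$, $\rho\le\sigma,\tau\Rightarrow\rho\le\sigma\wedge\tau$, and additionally: - $\psi_\bot\sim\omega$ and $\psi_{a\sqcup b}\sim\psi_a\wedge\psi_b$; - $\le_R\subseteq\le_D$; - $\omega\le_D\omega\to\omega$; - $\psi_a\le_D\omega\to\psi_a\le_D\psi_a$; - $\omega\le_C\omega\times\omega$;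 - $(\kappa\to\rho_1)\wedge(\kappa\to\rho_2)\le_D\kappa\to(\rho_1\wedge\rho_2)$; - $(\delta_1\times\kappa_1)\wedge(\delta_2\times\kappa_2)\le_C(\delta_1\wedge\delta_2)\times(\kappa_1\wedge\kappa_2)$; - $\to$ is contravariant in $\Lambda_C$ and covariant in $\Lambda_R$; - $\times$ is covariant in both arguments. Type assignment. Bases $\Gamma$ are finite maps from variables to $\Lambda_D$, and contexts $\Delta$ are finite maps from names to $\Lambda_C$. $\Gamma(x)$ and $\Delta(\alpha)$ are $\omega$ outside the domain. The rules are: - (Ax) $\Gamma,x{:}\delta\vdash x:\delta\mid\Delta$. - (Abs) From $\Gamma\vdash M:\kappa\to\rho\mid\Delta$, $\Gamma(x)=\delta$, infer $\Gamma\setminus x\vdash\lambda x.M:(\delta\times\kappa)\to\rho\mid\Delta$. - (App) From $\Gamma\vdash M:(\delta\times\kappa)\to\rho\mid\Delta$ and $\Gamma\vdash N:\delta\mid\Delta$, infer $\Gamma\vdash MN:\kappa\to\rho\mid\Delta$. - (Cmd) From $\Gamma\vdash M:\delta\mid\Delta$, $\Delta(\alpha)=\kappa$, infer $\Gamma\vdash[\alpha]M:\delta\times\kappa\mid\Delta$. - ($\mu$) From $\Gamma\vdash\mathsf C:(\kappa'\to\rho)\times\kappa'\mid\Delta$, $\Delta(\alpha)=\kappa$, infer $\Gamma\vdash\mu\alpha.\mathsf C:\kappa\to\rho\mid\Delta\setminus\alpha$. - ($\wedge$), ($\omega$) and ($\le$). *)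

theory Defs
  imports Main "HOL-Library.Countable_Set"
begin

definition directed_set :: "'a::complete_lattice set \<Rightarrow> bool" where
  "directed_set S \<longleftrightarrow> S \<noteq> {} \<and> (\<forall>x\<in>S. \<forall>y\<in>S. \<exists>z\<in>S. x \<le> z \<and> y \<le> z)"

definition compact_el :: "'a::complete_lattice \<Rightarrow> bool" where
  "compact_el a \<longleftrightarrow> (\<forall>S. directed_set S \<and> a \<le> Sup S \<longrightarrow> (\<exists>s\<in>S. a \<le> s))"

definition omega_algebraic :: "'a::complete_lattice itself \<Rightarrow> bool" where
  "omega_algebraic _ \<longleftrightarrow> countable {a::'a. compact_el a} \<and>
      (\<forall>x::'a. x = Sup {a. compact_el a \<and> a \<le> x})"

section \<open>lambda-mu terms (de Bruijn indices for variables and for names)\<close>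

datatype trm = Var nat | Lam trm | App trm trm | Mu cmd
     and cmd = Cmd nat trm

primrec liftV :: "nat \<Rightarrow> trm \<Rightarrow> trm" and liftVc :: "nat \<Rightarrow> cmd \<Rightarrow> cmd" where
  "liftV k (Var i) = (if k \<le> i then Var (Suc i) else Var i)"
| "liftV k (Lam M) = Lam (liftV (Suc k) M)"
| "liftV k (App M N) = App (liftV k M) (liftV k N)"
| "liftV k (Mu c) = Mu (liftVc k c)"
| "liftVc k (Cmd a M) = Cmd a (liftV k M)"

primrec liftN :: "nat \<Rightarrow> trm \<Rightarrow> trm" and liftNc :: "nat \<Rightarrow> cmd \<Rightarrow> cmd" where
  "liftN k (Var i) = Var i"
| "liftN k (Lam M) = Lam (liftN k M)"
| "liftN k (App M N) = App (liftN k M) (liftN k N)"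
| "liftN k (Mu c) = Mu (liftNc (Suc k) c)"
| "liftNc k (Cmd a M) = Cmd (if k \<le> a then Suc a else a) (liftN k M)"

primrec substV :: "nat \<Rightarrow> trm \<Rightarrow> trm \<Rightarrow> trm" and substVc :: "nat \<Rightarrow> trm \<Rightarrow> cmd \<Rightarrow> cmd" where
  "substV k N (Var i) = (if i = k then N else if k < i then Var (i - 1) else Var i)"
| "substV k N (Lam M) = Lam (substV (Suc k) (liftV 0 N) M)"
| "substV k N (App M1 M2) = App (substV k N M1) (substV k N M2)"
| "substV k N (Mu c) = Mu (substVc k (liftN 0 N) c)"
| "substVc k N (Cmd a M) = Cmd a (substV k N M)"

text \<open>Name renaming C[alpha/beta]: the name with index k is replaced by the name j,
  names above k are decremented (the binder of k disappears).\<close>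
primrec renN :: "nat \<Rightarrow> nat \<Rightarrow> trm \<Rightarrow> trm" and renNc :: "nat \<Rightarrow> nat \<Rightarrow> cmd \<Rightarrow> cmd" where
  "renN k j (Var i) = Var i"
| "renN k j (Lam M) = Lam (renN k j M)"
| "renN k j (App M N) = App (renN k j M) (renN k j N)"
| "renN k j (Mu c) = Mu (renNc (Suc k) (Suc j) c)"
| "renNc k j (Cmd a M) = Cmd (if a = k then j else if k < a then a - 1 else a) (renN k j M)"

primrec structN :: "nat \<Rightarrow> trm \<Rightarrow> trm \<Rightarrow> trm" and structNc :: "nat \<Rightarrow> trm \<Rightarrow> cmd \<Rightarrow> cmd" where
  "structN k L (Var i) = Var i"
| "structN k L (Lam M) = Lam (structN k (liftV 0 L) M)"
| "structN k L (App M N) = App (structN k L M) (structN k L N)"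
| "structN k L (Mu c) = Mu (structNc (Suc k) (liftN 0 L) c)"
| "structNc k L (Cmd a M) =
     (if a = k then Cmd a (App (structN k L M) L) else Cmd a (structN k L M))"

inductive red :: "trm \<Rightarrow> trm \<Rightarrow> bool" and redc :: "cmd \<Rightarrow> cmd \<Rightarrow> bool" where
  beta: "red (App (Lam M) N) (substV 0 N M)"
| mu: "red (App (Mu c) N) (Mu (structNc 0 (liftN 0 N) c))"
| ren: "redc (Cmd a (Mu c)) (renNc 0 a c)"
| lam: "red M M' \<Longrightarrow> red (Lam M) (Lam M')"
| appL: "red M M' \<Longrightarrow> red (App M N) (App M' N)"
| appR: "red N N' \<Longrightarrow> red (App M N) (App M N')"
| muC: "redc c c' \<Longrightarrow> red (Mu c) (Mu c')"
| cmdC: "red M M' \<Longrightarrow> redc (Cmd a M) (Cmd a M')"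

text \<open>Atoms psi_a are indexed by a type 'k which is put in bijection with the
  compact elements of R by a map emb (see the theorem). Lambda_R is the
  subset of Lambda_D singled out by isR.\<close>

datatype 'k dty = Psi 'k | OmD | AndD "'k dty" "'k dty" | Arr "'k cty" "'k dty"
     and 'k cty = Prod "'k dty" "'k cty" | OmC | AndC "'k cty" "'k cty"

primrec isR :: "'k dty \<Rightarrow> bool" where
  "isR (Psi a) = True"
| "isR OmD = True"
| "isR (AndD s t) = (isR s \<and> isR t)"
| "isR (Arr k r) = False"

primrec wfD :: "'k dty \<Rightarrow> bool" and wfC :: "'k cty \<Rightarrow> bool" where
  "wfD (Psi a) = True"
| "wfD OmD = True"
| "wfD (AndD s t) = (wfD s \<and> wfD t)"
| "wfD (Arr k r) = (wfC k \<and> isR r)"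
| "wfC (Prod d k) = (wfD d \<and> wfC k)"
| "wfC OmC = True"
| "wfC (AndC k1 k2) = (wfC k1 \<and> wfC k2)"

inductive leqR :: "('k \<Rightarrow> 'a::complete_lattice) \<Rightarrow> 'k dty \<Rightarrow> 'k dty \<Rightarrow> bool"
  for emb where
  R_refl: "isR s \<Longrightarrow> leqR emb s s"
| R_trans: "leqR emb r s \<Longrightarrow> leqR emb s t \<Longrightarrow> leqR emb r t"
| R_and1: "isR s \<Longrightarrow> isR t \<Longrightarrow> leqR emb (AndD s t) s"
| R_and2: "isR s \<Longrightarrow> isR t \<Longrightarrow> leqR emb (AndD s t) t"
| R_top: "isR s \<Longrightarrow> leqR emb s OmD"
| R_glb: "leqR emb r s \<Longrightarrow> leqR emb r t \<Longrightarrow> leqR emb r (AndD s t)"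
| R_bot1: "emb a = bot \<Longrightarrow> leqR emb (Psi a) OmD"
| R_bot2: "emb a = bot \<Longrightarrow> leqR emb OmD (Psi a)"
| R_join1: "emb c = sup (emb a) (emb b) \<Longrightarrow> leqR emb (Psi c) (AndD (Psi a) (Psi b))"
| R_join2: "emb c = sup (emb a) (emb b) \<Longrightarrow> leqR emb (AndD (Psi a) (Psi b)) (Psi c)"

inductive leqD :: "('k \<Rightarrow> 'a::complete_lattice) \<Rightarrow> 'k dty \<Rightarrow> 'k dty \<Rightarrow> bool"
      and leqC :: "('k \<Rightarrow> 'a::complete_lattice) \<Rightarrow> 'k cty \<Rightarrow> 'k cty \<Rightarrow> bool"
  for emb where
  D_refl: "wfD s \<Longrightarrow> leqD emb s s"
| D_trans: "leqD emb r s \<Longrightarrow> leqD emb s t \<Longrightarrow> leqD emb r t"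
| D_and1: "wfD s \<Longrightarrow> wfD t \<Longrightarrow> leqD emb (AndD s t) s"
| D_and2: "wfD s \<Longrightarrow> wfD t \<Longrightarrow> leqD emb (AndD s t) t"
| D_top: "wfD s \<Longrightarrow> leqD emb s OmD"
| D_glb: "leqD emb r s \<Longrightarrow> leqD emb r t \<Longrightarrow> leqD emb r (AndD s t)"
| D_R: "leqR emb r s \<Longrightarrow> leqD emb r s"
| D_om_arr: "leqD emb OmD (Arr OmC OmD)"
| D_psi_arr1: "leqD emb (Psi a) (Arr OmC (Psi a))"
| D_psi_arr2: "leqD emb (Arr OmC (Psi a)) (Psi a)"
| D_arr_and: "wfC k \<Longrightarrow> isR r1 \<Longrightarrow> isR r2 \<Longrightarrow>
     leqD emb (AndD (Arr k r1) (Arr k r2)) (Arr k (AndD r1 r2))"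
| D_arr: "leqC emb k' k \<Longrightarrow> leqR emb r r' \<Longrightarrow> leqD emb (Arr k r) (Arr k' r')"
| C_refl: "wfC s \<Longrightarrow> leqC emb s s"
| C_trans: "leqC emb r s \<Longrightarrow> leqC emb s t \<Longrightarrow> leqC emb r t"
| C_and1: "wfC s \<Longrightarrow> wfC t \<Longrightarrow> leqC emb (AndC s t) s"
| C_and2: "wfC s \<Longrightarrow> wfC t \<Longrightarrow> leqC emb (AndC s t) t"
| C_top: "wfC s \<Longrightarrow> leqC emb s OmC"
| C_glb: "leqC emb r s \<Longrightarrow> leqC emb r t \<Longrightarrow> leqC emb r (AndC s t)"
| C_om_prod: "leqC emb OmC (Prod OmD OmC)"
| C_prod_and: "wfD d1 \<Longrightarrow> wfD d2 \<Longrightarrow> wfC k1 \<Longrightarrow> wfC k2 \<Longrightarrow>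
     leqC emb (AndC (Prod d1 k1) (Prod d2 k2)) (Prod (AndD d1 d2) (AndC k1 k2))"
| C_prod: "leqD emb d d' \<Longrightarrow> leqC emb k k' \<Longrightarrow> leqC emb (Prod d k) (Prod d' k')"

text \<open>Bases and contexts are total maps (value omega outside the domain);
  binders are de Bruijn, so extending by x:delta / alpha:kappa is case_nat.\<close>

inductive tyass :: "('k \<Rightarrow> 'a::complete_lattice) \<Rightarrow> (nat \<Rightarrow> 'k dty) \<Rightarrow> (nat \<Rightarrow> 'k cty)
                   \<Rightarrow> trm \<Rightarrow> 'k dty \<Rightarrow> bool"
      and tyassc :: "('k \<Rightarrow> 'a::complete_lattice) \<Rightarrow> (nat \<Rightarrow> 'k dty) \<Rightarrow> (nat \<Rightarrow> 'k cty)
                   \<Rightarrow> cmd \<Rightarrow> 'k cty \<Rightarrow> bool"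
  for emb where
  T_Ax: "tyass emb \<Gamma> \<Delta> (Var x) (\<Gamma> x)"
| T_Abs: "wfD d \<Longrightarrow> tyass emb (case_nat d \<Gamma>) \<Delta> M (Arr k r) \<Longrightarrow>
     tyass emb \<Gamma> \<Delta> (Lam M) (Arr (Prod d k) r)"
| T_App: "tyass emb \<Gamma> \<Delta> M (Arr (Prod d k) r) \<Longrightarrow> tyass emb \<Gamma> \<Delta> N d \<Longrightarrow>
     tyass emb \<Gamma> \<Delta> (App M N) (Arr k r)"
| T_Mu: "wfC k \<Longrightarrow> tyassc emb \<Gamma> (case_nat k \<Delta>) c (Prod (Arr k' r) k') \<Longrightarrow>
     tyass emb \<Gamma> \<Delta> (Mu c) (Arr k r)"
| T_And: "tyass emb \<Gamma> \<Delta> M s \<Longrightarrow> tyass emb \<Gamma> \<Delta> M t \<Longrightarrow> tyass emb \<Gamma> \<Delta> M (AndD s t)"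
| T_Om: "tyass emb \<Gamma> \<Delta> M OmD"
| T_Sub: "tyass emb \<Gamma> \<Delta> M s \<Longrightarrow> leqD emb s t \<Longrightarrow> tyass emb \<Gamma> \<Delta> M t"
| T_Cmd: "tyass emb \<Gamma> \<Delta> M d \<Longrightarrow> tyassc emb \<Gamma> \<Delta> (Cmd a M) (Prod d (\<Delta> a))"
| TC_And: "tyassc emb \<Gamma> \<Delta> c s \<Longrightarrow> tyassc emb \<Gamma> \<Delta> c t \<Longrightarrow> tyassc emb \<Gamma> \<Delta> c (AndC s t)"
| TC_Om: "tyassc emb \<Gamma> \<Delta> c OmC"
| TC_Sub: "tyassc emb \<Gamma> \<Delta> c s \<Longrightarrow> leqC emb s t \<Longrightarrow> tyassc emb \<Gamma> \<Delta> c t"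

end

theory Submission imports Defs begin

lemma leqR_isR: "leqR emb s t \<Longrightarrow> isR s \<and> isR t"
  by (induction rule: leqR.induct) auto

lemma isR_wfD: "isR s \<Longrightarrow> wfD s"
  by (induction s) auto

lemma leq_wf: "leqD emb s t \<Longrightarrow> wfD s \<and> wfD t" "leqC emb k k' \<Longrightarrow> wfC k \<and> wfC k'"
  by (induction rule: leqD_leqC.inducts) (auto dest: leqR_isR isR_wfD)

lemma ty_wf:
  "tyass emb \<Gamma> \<Delta> M \<tau> \<Longrightarrow> (\<forall>x. wfD (\<Gamma> x)) \<Longrightarrow> (\<forall>a. wfC (\<Delta> a)) \<Longrightarrow> wfD \<tau>"
  "tyassc emb \<Gamma> \<Delta> c \<kappa> \<Longrightarrow> (\<forall>x. wfD (\<Gamma> x)) \<Longrightarrow> (\<forall>a. wfC (\<Delta> a)) \<Longrightarrow> wfC \<kappa>"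
  by (induction rule: tyass_tyassc.inducts) (auto split: nat.split dest: leq_wf)

fun hdC :: "'k cty \<Rightarrow> 'k dty" where
  "hdC (Prod d k) = d" | "hdC OmC = OmD" | "hdC (AndC a b) = AndD (hdC a) (hdC b)"
fun tlC :: "'k cty \<Rightarrow> 'k cty" where
  "tlC (Prod d k) = k" | "tlC OmC = OmC" | "tlC (AndC a b) = AndC (tlC a) (tlC b)"

lemma wf_hdtl: "wfC k \<Longrightarrow> wfD (hdC k) \<and> wfC (tlC k)"
  by (induction k rule: hdC.induct) auto

lemma hdtl_mono: "leqD emb s t \<Longrightarrow> True"
  "leqC emb k k' \<Longrightarrow> leqD emb (hdC k) (hdC k') \<and> leqC emb (tlC k) (tlC k')"
proof (induction rule: leqD_leqC.inducts)
qed (auto intro: leqD_leqC.intros dest: wf_hdtl leq_wf)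

lemma prod_inv: "leqC emb (Prod d k) (Prod d' k') \<Longrightarrow> leqD emb d d' \<and> leqC emb k k'"
  using hdtl_mono(2) by fastforce

primrec fD :: "('k \<Rightarrow> 'a::complete_lattice) \<Rightarrow> 'k dty \<Rightarrow> 'k cty \<Rightarrow> 'k dty" where
  "fD emb (Psi a) \<kappa> = Psi a"
| "fD emb OmD \<kappa> = OmD"
| "fD emb (AndD s t) \<kappa> = AndD (fD emb s \<kappa>) (fD emb t \<kappa>)"
| "fD emb (Arr k r) \<kappa> = (if leqC emb \<kappa> k then r else OmD)"

lemma fD_isR: "wfD s \<Longrightarrow> isR (fD emb s \<kappa>)"
  by (induction s) auto

lemma fD_R: "isR s \<Longrightarrow> fD emb s \<kappa> = s"
  by (induction s) auto

lemma fD_mono: "leqD emb s t \<Longrightarrow> (\<forall>\<kappa>. wfC \<kappa> \<longrightarrow> leqR emb (fD emb s \<kappa>) (fD emb t \<kappa>))"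
  "leqC emb k k' \<Longrightarrow> True"
proof (induction rule: leqD_leqC.inducts)
  case (D_refl s)
  then show ?case by (auto intro: leqR.intros fD_isR)
next
  case (D_and1 s t)
  then show ?case by (auto intro: leqR.intros fD_isR)
next
  case (D_and2 s t)
  then show ?case by (auto intro: leqR.intros fD_isR)
next
  case (D_top s)
  then show ?case by (auto intro: leqR.intros fD_isR)
next
  case (D_R r s)
  then show ?case using leqR_isR fD_R by metis
next
  case (D_psi_arr1 a)
  then show ?case by (auto intro: leqR.intros leqD_leqC.intros)
next
  case (D_psi_arr2 a)
  then show ?case by (auto intro: leqR.intros leqD_leqC.intros)
next
  case (D_arr_and k r1 r2)
  then show ?case by (auto intro: leqR.intros)
next
  case (D_arr k' k r r')
  then show ?case using leqR_isR by (auto intro: leqR.intros leqD_leqC.intros)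
qed (auto intro: leqR.intros)


definition ins :: "nat \<Rightarrow> 'b \<Rightarrow> (nat \<Rightarrow> 'b) \<Rightarrow> nat \<Rightarrow> 'b" where
  "ins k d G = (\<lambda>i. if i < k then G i else if i = k then d else G (i - 1))"

lemma ins_case: "case_nat d0 (ins k d G) = ins (Suc k) d (case_nat d0 G)"
  by (rule ext) (auto simp: ins_def split: nat.split)

lemma ins0: "ins 0 d G = case_nat d G"
  by (rule ext) (auto simp: ins_def split: nat.split)

lemma weakV:
  "tyass emb \<Gamma> \<Delta> M \<tau> \<Longrightarrow> (\<forall>k d. tyass emb (ins k d \<Gamma>) \<Delta> (liftV k M) \<tau>)"
  "tyassc emb \<Gamma> \<Delta> c \<kappa> \<Longrightarrow> (\<forall>k d. tyassc emb (ins k d \<Gamma>) \<Delta> (liftVc k c) \<kappa>)"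
proof (induction rule: tyass_tyassc.inducts)
  case (T_Ax \<Gamma> \<Delta> x)
  show ?case
  proof (intro allI)
    fix k d
    have "ins k d \<Gamma> (if k \<le> x then Suc x else x) = \<Gamma> x" by (auto simp: ins_def)
    then show "tyass emb (ins k d \<Gamma>) \<Delta> (liftV k (Var x)) (\<Gamma> x)"
      using tyass_tyassc.T_Ax[of emb "ins k d \<Gamma>" \<Delta> "if k \<le> x then Suc x else x"] by auto
  qed
next
  case (T_Abs d \<Gamma> \<Delta> M k r)
  then show ?case by (auto simp: ins_case intro: tyass_tyassc.intros)
qed (simp_all, (blast intro: tyass_tyassc.intros)+)

lemma weakN:
  "tyass emb \<Gamma> \<Delta> M \<tau> \<Longrightarrow> (\<forall>k d. tyass emb \<Gamma> (ins k d \<Delta>) (liftN k M) \<tau>)"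
  "tyassc emb \<Gamma> \<Delta> c \<kappa> \<Longrightarrow> (\<forall>k d. tyassc emb \<Gamma> (ins k d \<Delta>) (liftNc k c) \<kappa>)"
proof (induction rule: tyass_tyassc.inducts)
  case (T_Mu k0 \<Gamma> \<Delta> c k' r)
  show ?case
  proof (intro allI)
    fix k d
    have "tyassc emb \<Gamma> (ins (Suc k) d (case_nat k0 \<Delta>)) (liftNc (Suc k) c) (Prod (Arr k' r) k')"
      using T_Mu.IH by blast
    then have "tyassc emb \<Gamma> (case_nat k0 (ins k d \<Delta>)) (liftNc (Suc k) c) (Prod (Arr k' r) k')"
      by (simp add: ins_case)
    then show "tyass emb \<Gamma> (ins k d \<Delta>) (liftN k (Mu c)) (Arr k0 r)"
      using T_Mu.hyps(1) by (auto intro: tyass_tyassc.intros)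
  qed
next
  case (T_Cmd \<Gamma> \<Delta> M d a)
  show ?case
  proof (intro allI)
    fix k e
    have "ins k e \<Delta> (if k \<le> a then Suc a else a) = \<Delta> a" by (auto simp: ins_def)
    then show "tyassc emb \<Gamma> (ins k e \<Delta>) (liftNc k (Cmd a M)) (Prod d (\<Delta> a))"
      using tyass_tyassc.T_Cmd[of emb \<Gamma> "ins k e \<Delta>" "liftN k M" d "if k \<le> a then Suc a else a"] T_Cmd
      by auto
  qed
qed (simp_all, (blast intro: tyass_tyassc.intros)+)

lemma substL:
  "tyass emb \<Gamma>' \<Delta> M \<tau> \<Longrightarrow> (\<forall>k \<Gamma> N d. \<Gamma>' = ins k d \<Gamma> \<longrightarrow> tyass emb \<Gamma> \<Delta> N d \<longrightarrow> tyass emb \<Gamma> \<Delta> (substV k N M) \<tau>)"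
  "tyassc emb \<Gamma>' \<Delta> c \<kappa> \<Longrightarrow> (\<forall>k \<Gamma> N d. \<Gamma>' = ins k d \<Gamma> \<longrightarrow> tyass emb \<Gamma> \<Delta> N d \<longrightarrow> tyassc emb \<Gamma> \<Delta> (substVc k N c) \<kappa>)"
proof (induction rule: tyass_tyassc.inducts)
  case (T_Ax \<Gamma>' \<Delta> x)
  show ?case
  proof (intro allI impI)
    fix k \<Gamma> N d assume a: "\<Gamma>' = ins k d \<Gamma>" "tyass emb \<Gamma> \<Delta> N d"
    show "tyass emb \<Gamma> \<Delta> (substV k N (Var x)) (\<Gamma>' x)"
    proof (cases "x = k")
      case True then show ?thesis using a by (simp add: ins_def)
    next
      case False
      then show ?thesis using a tyass_tyassc.T_Ax[of emb \<Gamma> \<Delta> "x - 1"] tyass_tyassc.T_Ax[of emb \<Gamma> \<Delta> x]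
        by (auto simp: ins_def)
    qed
  qed
next
  case (T_Abs d0 \<Gamma>' \<Delta> M k r)
  show ?case
  proof (intro allI impI)
    fix j \<Gamma> N d assume a: "\<Gamma>' = ins j d \<Gamma>" "tyass emb \<Gamma> \<Delta> N d"
    have "tyass emb (case_nat d0 \<Gamma>) \<Delta> (liftV 0 N) d" using weakV(1)[OF a(2)] by (metis ins0)
    moreover have "case_nat d0 \<Gamma>' = ins (Suc j) d (case_nat d0 \<Gamma>)" using a(1) ins_case by metis
    ultimately have "tyass emb (case_nat d0 \<Gamma>) \<Delta> (substV (Suc j) (liftV 0 N) M) (Arr k r)"
      using T_Abs.IH by blast
    then show "tyass emb \<Gamma> \<Delta> (substV j N (Lam M)) (Arr (Prod d0 k) r)"
      using T_Abs.hyps(1) by (auto intro: tyass_tyassc.intros)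
  qed
next
  case (T_Mu k0 \<Gamma>' \<Delta> c k' r)
  show ?case
  proof (intro allI impI)
    fix j \<Gamma> N d assume a: "\<Gamma>' = ins j d \<Gamma>" "tyass emb \<Gamma> \<Delta> N d"
    have "tyass emb \<Gamma> (case_nat k0 \<Delta>) (liftN 0 N) d" using weakN(1)[OF a(2)] by (metis ins0)
    then have "tyassc emb \<Gamma> (case_nat k0 \<Delta>) (substVc j (liftN 0 N) c) (Prod (Arr k' r) k')"
      using T_Mu.IH a(1) by blast
    then show "tyass emb \<Gamma> \<Delta> (substV j N (Mu c)) (Arr k0 r)"
      using T_Mu.hyps(1) by (auto intro: tyass_tyassc.intros)
  qed
qed (simp_all, (blast intro: tyass_tyassc.intros)+)

lemma renL:
  "tyass emb \<Gamma> \<Delta>' M \<tau> \<Longrightarrow> (\<forall>k j \<Delta>. \<Delta>' = ins k (\<Delta> j) \<Delta> \<longrightarrow> tyass emb \<Gamma> \<Delta> (renN k j M) \<tau>)"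
  "tyassc emb \<Gamma> \<Delta>' c \<kappa> \<Longrightarrow> (\<forall>k j \<Delta>. \<Delta>' = ins k (\<Delta> j) \<Delta> \<longrightarrow> tyassc emb \<Gamma> \<Delta> (renNc k j c) \<kappa>)"
proof (induction rule: tyass_tyassc.inducts)
  case (T_Mu k0 \<Gamma> \<Delta>' c k' r)
  show ?case
  proof (intro allI impI)
    fix k j \<Delta> assume a: "\<Delta>' = ins k (\<Delta> j) \<Delta>"
    have "case_nat k0 \<Delta>' = ins (Suc k) ((case_nat k0 \<Delta>) (Suc j)) (case_nat k0 \<Delta>)"
      using a ins_case by simp
    then have "tyassc emb \<Gamma> (case_nat k0 \<Delta>) (renNc (Suc k) (Suc j) c) (Prod (Arr k' r) k')"
      using T_Mu.IH by blast
    then show "tyass emb \<Gamma> \<Delta> (renN k j (Mu c)) (Arr k0 r)"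
      using T_Mu.hyps(1) by (auto intro: tyass_tyassc.intros)
  qed
next
  case (T_Cmd \<Gamma> \<Delta>' M d a)
  show ?case
  proof (intro allI impI)
    fix k j \<Delta> assume a: "\<Delta>' = ins k (\<Delta> j) \<Delta>"
    define a' where "a' = (if a = k then j else if k < a then a - 1 else a)"
    have e: "\<Delta> a' = \<Delta>' a" using a by (auto simp: ins_def a'_def)
    have "tyass emb \<Gamma> \<Delta> (renN k j M) d" using T_Cmd.IH a by blast
    from tyass_tyassc.T_Cmd[OF this, of a'] e
    show "tyassc emb \<Gamma> \<Delta> (renNc k j (Cmd a M)) (Prod d (\<Delta>' a))" by (simp add: a'_def)
  qed
qed (simp_all, (blast intro: tyass_tyassc.intros)+)

lemma narrow:
  "tyass emb \<Gamma> \<Delta> M \<tau> \<Longrightarrow> (\<forall>\<Gamma>' \<Delta>'. (\<forall>x. leqD emb (\<Gamma>' x) (\<Gamma> x)) \<longrightarrow> (\<forall>a. leqC emb (\<Delta>' a) (\<Delta> a)) \<longrightarrow> tyass emb \<Gamma>' \<Delta>' M \<tau>)"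
  "tyassc emb \<Gamma> \<Delta> c \<kappa> \<Longrightarrow> (\<forall>\<Gamma>' \<Delta>'. (\<forall>x. leqD emb (\<Gamma>' x) (\<Gamma> x)) \<longrightarrow> (\<forall>a. leqC emb (\<Delta>' a) (\<Delta> a)) \<longrightarrow> tyassc emb \<Gamma>' \<Delta>' c \<kappa>)"
proof (induction rule: tyass_tyassc.inducts)
  case (T_Ax \<Gamma> \<Delta> x)
  then show ?case by (auto intro: tyass_tyassc.intros)
next
  case (T_Abs d \<Gamma> \<Delta> M k r)
  show ?case
  proof (intro allI impI)
    fix \<Gamma>' \<Delta>' assume a: "\<forall>x. leqD emb (\<Gamma>' x) (\<Gamma> x)" "\<forall>a. leqC emb (\<Delta>' a) (\<Delta> a)"
    have "\<forall>x. leqD emb (case_nat d \<Gamma>' x) (case_nat d \<Gamma> x)"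
      using a(1) T_Abs.hyps(1) by (auto split: nat.split intro: leqD_leqC.intros)
    then show "tyass emb \<Gamma>' \<Delta>' (Lam M) (Arr (Prod d k) r)"
      using T_Abs a by (auto intro: tyass_tyassc.intros)
  qed
next
  case (T_Mu k \<Gamma> \<Delta> c k' r)
  show ?case
  proof (intro allI impI)
    fix \<Gamma>' \<Delta>' assume a: "\<forall>x. leqD emb (\<Gamma>' x) (\<Gamma> x)" "\<forall>a. leqC emb (\<Delta>' a) (\<Delta> a)"
    have "\<forall>x. leqC emb (case_nat k \<Delta>' x) (case_nat k \<Delta> x)"
      using a(2) T_Mu.hyps(1) by (auto split: nat.split intro: leqD_leqC.intros)
    then have "tyassc emb \<Gamma>' (case_nat k \<Delta>') c (Prod (Arr k' r) k')"
      using T_Mu.IH a by blast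
    then show "tyass emb \<Gamma>' \<Delta>' (Mu c) (Arr k r)"
      using T_Mu.hyps(1) by (auto intro: tyass_tyassc.intros)
  qed
next
  case (T_Cmd \<Gamma> \<Delta> M d a)
  show ?case
  proof (intro allI impI)
    fix \<Gamma>' \<Delta>' assume a: "\<forall>x. leqD emb (\<Gamma>' x) (\<Gamma> x)" "\<forall>a. leqC emb (\<Delta>' a) (\<Delta> a)"
    have M: "tyass emb \<Gamma>' \<Delta>' M d" using T_Cmd a by blast
    have "wfD d" using ty_wf(1)[OF M] a leq_wf by blast
    then have "leqC emb (Prod d (\<Delta>' a)) (Prod d (\<Delta> a))"
      using a(2) by (auto intro: leqD_leqC.intros)
    then show "tyassc emb \<Gamma>' \<Delta>' (Cmd a M) (Prod d (\<Delta> a))"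
      using M by (auto intro: tyass_tyassc.intros)
  qed
qed (simp_all, (blast intro: tyass_tyassc.intros)+)


lemma arrOm: "wfC k \<Longrightarrow> tyass emb \<Gamma> \<Delta> M (Arr k OmD)"
proof -
  assume k: "wfC k"
  have "leqD emb OmD (Arr k OmD)"
    using D_trans[OF D_om_arr D_arr[OF C_top[OF k] R_refl]] by simp
  then show ?thesis by (rule T_Sub[OF T_Om])
qed

lemma cmdOm: "tyassc emb \<Gamma> \<Delta> c (Prod (Arr OmC OmD) OmC)"
proof -
  have "leqC emb OmC (Prod (Arr OmC OmD) OmC)"
    using C_trans[OF C_om_prod C_prod[OF D_om_arr C_refl]] by simp
  then show ?thesis by (rule TC_Sub[OF TC_Om])
qed

lemma gen_and: "leqC emb (Prod e1 \<kappa>) s \<Longrightarrow> leqC emb (Prod e2 \<kappa>) t \<Longrightarrow> wfD e1 \<Longrightarrow> wfD e2 \<Longrightarrow> wfC \<kappa>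
  \<Longrightarrow> leqC emb (Prod (AndD e1 e2) \<kappa>) (AndC s t)"
proof -
  assume h: "leqC emb (Prod e1 \<kappa>) s" "leqC emb (Prod e2 \<kappa>) t" "wfD e1" "wfD e2" "wfC \<kappa>"
  show ?thesis
    by (rule C_glb[OF C_trans[OF C_prod[OF D_and1[OF h(3,4)] C_refl[OF h(5)]] h(1)]
                      C_trans[OF C_prod[OF D_and2[OF h(3,4)] C_refl[OF h(5)]] h(2)]])
qed

lemma gen_om: "wfD e \<Longrightarrow> wfC \<kappa> \<Longrightarrow> leqC emb (Prod e \<kappa>) OmC"
  by (simp add: C_top)

lemma and_combine: "wfC k1 \<Longrightarrow> wfC k2 \<Longrightarrow> isR r1 \<Longrightarrow> isR r2 \<Longrightarrow>
  leqC emb (AndC (Prod (Arr k1 r1) k1) (Prod (Arr k2 r2) k2)) (Prod (Arr (AndC k1 k2) (AndD r1 r2)) (AndC k1 k2))"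
proof -
  assume h: "wfC k1" "wfC k2" "isR r1" "isR r2"
  have w: "wfD (Arr k1 r1)" "wfD (Arr k2 r2)" "wfC (AndC k1 k2)" using h by simp_all
  have a: "leqD emb (AndD (Arr k1 r1) (Arr k2 r2)) (Arr (AndC k1 k2) (AndD r1 r2))"
    by (rule D_trans[OF D_glb[OF D_trans[OF D_and1[OF w(1,2)] D_arr[OF C_and1[OF h(1,2)] R_refl[OF h(3)]]]
                                 D_trans[OF D_and2[OF w(1,2)] D_arr[OF C_and2[OF h(1,2)] R_refl[OF h(4)]]]]
                         D_arr_and[OF w(3) h(3,4)]])
  show ?thesis
    by (rule C_trans[OF C_prod_and[OF w(1,2) h(1,2)] C_prod[OF a C_refl[OF w(3)]]])
qed

lemma cmd_gen:
  fixes emb :: "'k \<Rightarrow> 'a::complete_lattice" and \<Gamma> :: "nat \<Rightarrow> 'k dty" and \<Delta> :: "nat \<Rightarrow> 'k cty"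
  shows "tyass emb \<Gamma> \<Delta> M0 \<tau>0 \<Longrightarrow> True"
  "tyassc emb \<Gamma> \<Delta> c \<tau> \<Longrightarrow> (\<forall>x. wfD (\<Gamma> x)) \<longrightarrow> (\<forall>a. wfC (\<Delta> a)) \<longrightarrow>
     (\<forall>b M. c = Cmd b M \<longrightarrow> (\<exists>e. tyass emb \<Gamma> \<Delta> M e \<and> leqC emb (Prod e (\<Delta> b)) \<tau>))"
proof (induction rule: tyass_tyassc.inducts)
  case (T_Cmd \<Gamma> \<Delta> M d a)
  show ?case
  proof (intro impI allI)
    fix b M' assume wG: "\<forall>x. wfD (\<Gamma> x)" and wD: "\<forall>a. wfC (\<Delta> a)" and e: "Cmd a M = Cmd b M'"
    have "wfD d" using ty_wf(1)[OF T_Cmd(1) wG wD] .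
    then have "leqC emb (Prod d (\<Delta> a)) (Prod d (\<Delta> a))" using wD by (simp add: C_refl)
    then show "\<exists>e. tyass emb \<Gamma> \<Delta> M' e \<and> leqC emb (Prod e (\<Delta> b)) (Prod d (\<Delta> a))"
      using e T_Cmd(1) by auto
  qed
next
  case (TC_And \<Gamma> \<Delta> c s t)
  show ?case
  proof (intro impI allI)
    fix b M assume wG: "\<forall>x. wfD (\<Gamma> x)" and wD: "\<forall>a. wfC (\<Delta> a)" and e: "c = Cmd b M"
    obtain e1 where 1: "tyass emb \<Gamma> \<Delta> M e1" "leqC emb (Prod e1 (\<Delta> b)) s" using TC_And wG wD e by blast
    obtain e2 where 2: "tyass emb \<Gamma> \<Delta> M e2" "leqC emb (Prod e2 (\<Delta> b)) t" using TC_And wG wD e by blast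
    have "leqC emb (Prod (AndD e1 e2) (\<Delta> b)) (AndC s t)"
      using gen_and[OF 1(2) 2(2)] ty_wf(1)[OF 1(1) wG wD] ty_wf(1)[OF 2(1) wG wD] wD by blast
    then show "\<exists>e. tyass emb \<Gamma> \<Delta> M e \<and> leqC emb (Prod e (\<Delta> b)) (AndC s t)"
      using 1(1) 2(1) T_And by blast
  qed
next
  case (TC_Om \<Gamma> \<Delta> c)
  then show ?case by (meson T_Om gen_om wfD.simps(2))
next
  case (TC_Sub \<Gamma> \<Delta> c s t)
  show ?case
  proof (intro impI allI)
    fix b M assume wG: "\<forall>x. wfD (\<Gamma> x)" and wD: "\<forall>a. wfC (\<Delta> a)" and e: "c = Cmd b M"
    obtain e1 where 1: "tyass emb \<Gamma> \<Delta> M e1" "leqC emb (Prod e1 (\<Delta> b)) s" using TC_Sub wG wD e by blast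
    then show "\<exists>e. tyass emb \<Gamma> \<Delta> M e \<and> leqC emb (Prod e (\<Delta> b)) t"
      using 1(1) C_trans[OF 1(2) \<open>leqC emb s t\<close>] by blast
  qed
qed auto

lemma lam_gen:
  fixes emb :: "'k \<Rightarrow> 'a::complete_lattice" and \<Gamma> :: "nat \<Rightarrow> 'k dty" and \<Delta> :: "nat \<Rightarrow> 'k cty"
  shows "tyass emb \<Gamma> \<Delta> X \<delta> \<Longrightarrow> (\<forall>x. wfD (\<Gamma> x)) \<longrightarrow> (\<forall>a. wfC (\<Delta> a)) \<longrightarrow>
     (\<forall>M. X = Lam M \<longrightarrow> (\<forall>d k. wfD d \<longrightarrow> wfC k \<longrightarrow>
        tyass emb (case_nat d \<Gamma>) \<Delta> M (Arr k (fD emb \<delta> (Prod d k)))))"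
  "tyassc emb \<Gamma> \<Delta> c \<tau> \<Longrightarrow> True"
proof (induction rule: tyass_tyassc.inducts)
  case (T_Abs d0 \<Gamma> \<Delta> M k0 r)
  show ?case
  proof (intro impI allI)
    fix M' and d :: "'k dty" and k :: "'k cty" assume wG: "\<forall>x. wfD (\<Gamma> x)" and wD: "\<forall>a. wfC (\<Delta> a)" and e: "Lam M = Lam M'"
      and wd: "wfD d" and wk: "wfC k"
    have wG0: "\<forall>x. wfD (case_nat d0 \<Gamma> x)" using wG T_Abs.hyps(1) by (simp split: nat.split)
    have wA: "wfD (Arr k0 r)" using ty_wf(1)[OF T_Abs(2) wG0 wD] .
    show "tyass emb (case_nat d \<Gamma>) \<Delta> M' (Arr k (fD emb (Arr (Prod d0 k0) r) (Prod d k)))"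
    proof (cases "leqC emb (Prod d k) (Prod d0 k0)")
      case True
      then have le: "leqD emb d d0" "leqC emb k k0" using prod_inv by blast+
      have "\<forall>x. leqD emb (case_nat d \<Gamma> x) (case_nat d0 \<Gamma> x)"
        using le wG by (auto split: nat.split intro: D_refl)
      moreover have "\<forall>a. leqC emb (\<Delta> a) (\<Delta> a)" using wD by (auto intro: C_refl)
      ultimately have "tyass emb (case_nat d \<Gamma>) \<Delta> M (Arr k0 r)"
        using narrow(1)[OF T_Abs(2)] by blast
      moreover have "leqD emb (Arr k0 r) (Arr k r)" using le wA by (auto intro: D_arr R_refl)
      ultimately show ?thesis using True e by (auto intro: T_Sub)
    next
      case False
      then show ?thesis using arrOm wk by simp
    qed
  qed
next
  case (T_And \<Gamma> \<Delta> M s t)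
  show ?case
  proof (intro impI allI)
    fix M' and d :: "'k dty" and k :: "'k cty" assume wG: "\<forall>x. wfD (\<Gamma> x)" and wD: "\<forall>a. wfC (\<Delta> a)" and e: "M = Lam M'"
      and wd: "wfD d" and wk: "wfC k"
    have 1: "tyass emb (case_nat d \<Gamma>) \<Delta> M' (Arr k (fD emb s (Prod d k)))"
     and 2: "tyass emb (case_nat d \<Gamma>) \<Delta> M' (Arr k (fD emb t (Prod d k)))"
      using T_And.IH wG wD e wd wk by blast+
    have "tyass emb \<Gamma> \<Delta> M s" "tyass emb \<Gamma> \<Delta> M t" by fact+
    then have "wfD s" "wfD t" using ty_wf(1) wG wD by blast+
    then have "leqD emb (AndD (Arr k (fD emb s (Prod d k))) (Arr k (fD emb t (Prod d k))))
       (Arr k (fD emb (AndD s t) (Prod d k)))" using wk by (simp add: D_arr_and fD_isR)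
    then show "tyass emb (case_nat d \<Gamma>) \<Delta> M' (Arr k (fD emb (AndD s t) (Prod d k)))"
      using 1 2 by (meson tyass_tyassc.T_And tyass_tyassc.T_Sub)
  qed
next
  case (T_Om \<Gamma> \<Delta> M)
  then show ?case by (auto intro: arrOm)
next
  case (T_Sub \<Gamma> \<Delta> M s t)
  show ?case
  proof (intro impI allI)
    fix M' and d :: "'k dty" and k :: "'k cty" assume wG: "\<forall>x. wfD (\<Gamma> x)" and wD: "\<forall>a. wfC (\<Delta> a)" and e: "M = Lam M'"
      and wd: "wfD d" and wk: "wfC k"
    have 1: "tyass emb (case_nat d \<Gamma>) \<Delta> M' (Arr k (fD emb s (Prod d k)))"
      using T_Sub.IH wG wD e wd wk by blast
    have "leqR emb (fD emb s (Prod d k)) (fD emb t (Prod d k))"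
      using fD_mono(1)[OF \<open>leqD emb s t\<close>] wd wk by simp
    then have "leqD emb (Arr k (fD emb s (Prod d k))) (Arr k (fD emb t (Prod d k)))"
      using wk by (simp add: C_refl D_arr)
    then show "tyass emb (case_nat d \<Gamma>) \<Delta> M' (Arr k (fD emb t (Prod d k)))"
      using 1 T_Sub by (meson tyass_tyassc.T_Sub)
  qed
qed auto

lemma mu_gen:
  fixes emb :: "'k \<Rightarrow> 'a::complete_lattice" and \<Gamma> :: "nat \<Rightarrow> 'k dty" and \<Delta> :: "nat \<Rightarrow> 'k cty"
  shows "tyass emb \<Gamma> \<Delta> X \<delta> \<Longrightarrow> (\<forall>x. wfD (\<Gamma> x)) \<longrightarrow> (\<forall>a. wfC (\<Delta> a)) \<longrightarrow>
     (\<forall>c. X = Mu c \<longrightarrow> (\<forall>\<kappa>. wfC \<kappa> \<longrightarrow>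
        (\<exists>k'. tyassc emb \<Gamma> (case_nat \<kappa> \<Delta>) c (Prod (Arr k' (fD emb \<delta> \<kappa>)) k'))))"
  "tyassc emb \<Gamma> \<Delta> c \<tau> \<Longrightarrow> True"
proof (induction rule: tyass_tyassc.inducts)
  case (T_Mu k0 \<Gamma> \<Delta> c k' r)
  show ?case
  proof (intro impI allI)
    fix c' and \<kappa> :: "'k cty" assume wG: "\<forall>x. wfD (\<Gamma> x)" and wD: "\<forall>a. wfC (\<Delta> a)" and e: "Mu c = Mu c'"
      and wk: "wfC \<kappa>"
    show "\<exists>k''. tyassc emb \<Gamma> (case_nat \<kappa> \<Delta>) c' (Prod (Arr k'' (fD emb (Arr k0 r) \<kappa>)) k'')"
    proof (cases "leqC emb \<kappa> k0")
      case True
      have "\<forall>x. leqC emb (case_nat \<kappa> \<Delta> x) (case_nat k0 \<Delta> x)"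
        using True wD by (auto split: nat.split intro: C_refl)
      moreover have "\<forall>x. leqD emb (\<Gamma> x) (\<Gamma> x)" using wG by (auto intro: D_refl)
      ultimately have "tyassc emb \<Gamma> (case_nat \<kappa> \<Delta>) c (Prod (Arr k' r) k')"
        using narrow(2)[OF T_Mu(2)] by blast
      then show ?thesis using True e by auto
    next
      case False
      then show ?thesis using cmdOm[of emb \<Gamma> "case_nat \<kappa> \<Delta>" c'] by auto
    qed
  qed
next
  case (T_And \<Gamma> \<Delta> M s t)
  show ?case
  proof (intro impI allI)
    fix c and \<kappa> :: "'k cty" assume wG: "\<forall>x. wfD (\<Gamma> x)" and wD: "\<forall>a. wfC (\<Delta> a)" and e: "M = Mu c"
      and wk: "wfC \<kappa>"
    have wD': "\<forall>a. wfC (case_nat \<kappa> \<Delta> a)" using wD wk by (simp split: nat.split)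
    obtain k1 k2 where 1: "tyassc emb \<Gamma> (case_nat \<kappa> \<Delta>) c (Prod (Arr k1 (fD emb s \<kappa>)) k1)"
     and 2: "tyassc emb \<Gamma> (case_nat \<kappa> \<Delta>) c (Prod (Arr k2 (fD emb t \<kappa>)) k2)"
      using T_And.IH wG wD e wk by blast
    have w1: "wfC (Prod (Arr k1 (fD emb s \<kappa>)) k1)" using ty_wf(2)[OF 1 wG wD'] .
    have w2: "wfC (Prod (Arr k2 (fD emb t \<kappa>)) k2)" using ty_wf(2)[OF 2 wG wD'] .
    have "tyassc emb \<Gamma> (case_nat \<kappa> \<Delta>) c (Prod (Arr (AndC k1 k2) (fD emb (AndD s t) \<kappa>)) (AndC k1 k2))"
      using TC_Sub[OF TC_And[OF 1 2] and_combine] w1 w2 by simp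
    then show "\<exists>k'. tyassc emb \<Gamma> (case_nat \<kappa> \<Delta>) c (Prod (Arr k' (fD emb (AndD s t) \<kappa>)) k')" by blast
  qed
next
  case (T_Om \<Gamma> \<Delta> M)
  then show ?case by (auto intro!: exI[of _ OmC] cmdOm)
next
  case (T_Sub \<Gamma> \<Delta> M s t)
  show ?case
  proof (intro impI allI)
    fix c and \<kappa> :: "'k cty" assume wG: "\<forall>x. wfD (\<Gamma> x)" and wD: "\<forall>a. wfC (\<Delta> a)" and e: "M = Mu c"
      and wk: "wfC \<kappa>"
    have wD': "\<forall>a. wfC (case_nat \<kappa> \<Delta> a)" using wD wk by (simp split: nat.split)
    obtain k1 where 1: "tyassc emb \<Gamma> (case_nat \<kappa> \<Delta>) c (Prod (Arr k1 (fD emb s \<kappa>)) k1)"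
      using T_Sub.IH wG wD e wk by blast
    have w1: "wfC (Prod (Arr k1 (fD emb s \<kappa>)) k1)" using ty_wf(2)[OF 1 wG wD'] .
    have "leqR emb (fD emb s \<kappa>) (fD emb t \<kappa>)"
      using fD_mono(1)[OF \<open>leqD emb s t\<close>] wk by simp
    then have "leqC emb (Prod (Arr k1 (fD emb s \<kappa>)) k1) (Prod (Arr k1 (fD emb t \<kappa>)) k1)"
      using w1 by (simp add: C_refl D_arr C_prod)
    then show "\<exists>k'. tyassc emb \<Gamma> (case_nat \<kappa> \<Delta>) c (Prod (Arr k' (fD emb t \<kappa>)) k')"
      using 1 TC_Sub by blast
  qed
qed auto


lemma struct_step:
  fixes emb :: "'k \<Rightarrow> 'a::complete_lattice" and \<Gamma> :: "nat \<Rightarrow> 'k dty" and \<Delta> :: "nat \<Rightarrow> 'k cty"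
  assumes M: "tyass emb \<Gamma> (\<Delta>(\<alpha> := k)) M' e"
    and le: "leqC emb (Prod e (\<Delta> b)) (Prod (Arr k' \<rho>) k')"
    and a: "\<Delta> \<alpha> = Prod d k"
    and L: "tyass emb \<Gamma> (\<Delta>(\<alpha> := k)) L d"
  shows "\<exists>k''. tyassc emb \<Gamma> (\<Delta>(\<alpha> := k)) (if b = \<alpha> then Cmd b (App M' L) else Cmd b M')
            (Prod (Arr k'' \<rho>) k'')"
proof -
  have le1: "leqD emb e (Arr k' \<rho>)" and le2: "leqC emb (\<Delta> b) k'" using prod_inv[OF le] by blast+
  have wA: "wfD (Arr k' \<rho>)" using leq_wf(1)[OF le1] by blast
  show ?thesis
  proof (cases "b = \<alpha>")
    case True
    then have "leqC emb (Prod d k) k'" using le2 a by simp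
    then have "leqD emb (Arr k' \<rho>) (Arr (Prod d k) \<rho>)" using wA by (simp add: D_arr R_refl)
    then have "tyass emb \<Gamma> (\<Delta>(\<alpha> := k)) M' (Arr (Prod d k) \<rho>)"
      using T_Sub[OF M D_trans[OF le1]] by blast
    then have "tyass emb \<Gamma> (\<Delta>(\<alpha> := k)) (App M' L) (Arr k \<rho>)" using T_App L by blast
    then have "tyassc emb \<Gamma> (\<Delta>(\<alpha> := k)) (Cmd b (App M' L)) (Prod (Arr k \<rho>) k)"
      using T_Cmd[of emb \<Gamma> "\<Delta>(\<alpha> := k)" "App M' L" "Arr k \<rho>" b] True by simp
    then show ?thesis using True by auto
  next
    case False
    then have "tyassc emb \<Gamma> (\<Delta>(\<alpha> := k)) (Cmd b M') (Prod e (\<Delta> b))"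
      using T_Cmd[OF M, of b] by simp
    then show ?thesis using False TC_Sub[OF _ le] by auto
  qed
qed

lemma upd_case: "(case_nat k0 D)(Suc \<alpha> := k) = case_nat k0 (D(\<alpha> := k))"
  by (rule ext) (simp split: nat.split)

lemma structL:
  fixes emb :: "'k \<Rightarrow> 'a::complete_lattice" and \<Gamma> :: "nat \<Rightarrow> 'k dty" and \<Delta> :: "nat \<Rightarrow> 'k cty"
  shows "tyass emb \<Gamma> \<Delta> M \<tau> \<Longrightarrow> (\<forall>x. wfD (\<Gamma> x)) \<longrightarrow> (\<forall>a. wfC (\<Delta> a)) \<longrightarrow>
    (\<forall>\<alpha> d k L. \<Delta> \<alpha> = Prod d k \<longrightarrow> tyass emb \<Gamma> (\<Delta>(\<alpha> := k)) L d \<longrightarrow>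
        tyass emb \<Gamma> (\<Delta>(\<alpha> := k)) (structN \<alpha> L M) \<tau>)"
  "tyassc emb \<Gamma> \<Delta> c \<kappa> \<Longrightarrow> (\<forall>x. wfD (\<Gamma> x)) \<longrightarrow> (\<forall>a. wfC (\<Delta> a)) \<longrightarrow>
    (\<forall>\<alpha> d k L. \<Delta> \<alpha> = Prod d k \<longrightarrow> tyass emb \<Gamma> (\<Delta>(\<alpha> := k)) L d \<longrightarrow>
       (\<forall>b M. c = Cmd b M \<longrightarrow>
          (\<exists>e. tyass emb \<Gamma> (\<Delta>(\<alpha> := k)) (structN \<alpha> L M) e \<and> leqC emb (Prod e (\<Delta> b)) \<kappa>)))"
proof (induction rule: tyass_tyassc.inducts)
  case (T_Ax \<Gamma> \<Delta> x)
  then show ?case by (simp add: tyass_tyassc.T_Ax)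
next
  case (T_Abs d0 \<Gamma> \<Delta> M k0 r)
  show ?case
  proof (intro impI allI)
    fix \<alpha> d k L assume wG: "\<forall>x. wfD (\<Gamma> x)" and wD: "\<forall>a. wfC (\<Delta> a)" and a: "\<Delta> \<alpha> = Prod d k"
      and L: "tyass emb \<Gamma> (\<Delta>(\<alpha> := k)) L d"
    have wG0: "\<forall>x. wfD (case_nat d0 \<Gamma> x)" using wG T_Abs.hyps(1) by (simp split: nat.split)
    have "tyass emb (case_nat d0 \<Gamma>) (\<Delta>(\<alpha> := k)) (liftV 0 L) d" using weakV(1)[OF L] by (metis ins0)
    then have "tyass emb (case_nat d0 \<Gamma>) (\<Delta>(\<alpha> := k)) (structN \<alpha> (liftV 0 L) M) (Arr k0 r)"
      using T_Abs.IH wG0 wD a by blast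
    then show "tyass emb \<Gamma> (\<Delta>(\<alpha> := k)) (structN \<alpha> L (Lam M)) (Arr (Prod d0 k0) r)"
      using T_Abs.hyps(1) by (simp add: tyass_tyassc.T_Abs)
  qed
next
  case (T_App \<Gamma> \<Delta> M d k r N)
  then show ?case by (simp, meson tyass_tyassc.T_App)
next
  case (T_Mu k0 \<Gamma> \<Delta> c k' r)
  show ?case
  proof (intro impI allI)
    fix \<alpha> d k L assume wG: "\<forall>x. wfD (\<Gamma> x)" and wD: "\<forall>a. wfC (\<Delta> a)" and a: "\<Delta> \<alpha> = Prod d k"
      and L: "tyass emb \<Gamma> (\<Delta>(\<alpha> := k)) L d"
    define D0 where "D0 = case_nat k0 \<Delta>"
    have wD0: "\<forall>x. wfC (D0 x)" using wD T_Mu.hyps(1) by (simp add: D0_def split: nat.split)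
    have a0: "D0 (Suc \<alpha>) = Prod d k" using a by (simp add: D0_def)
    have eq: "D0(Suc \<alpha> := k) = case_nat k0 (\<Delta>(\<alpha> := k))" by (simp add: D0_def upd_case)
    have L0: "tyass emb \<Gamma> (D0(Suc \<alpha> := k)) (liftN 0 L) d"
      using weakN(1)[OF L] eq by (metis ins0)
    obtain b M0 where c: "c = Cmd b M0" by (cases c)
    have "tyassc emb \<Gamma> D0 c (Prod (Arr k' r) k')" using T_Mu(2) by (simp add: D0_def)
    obtain e where e1: "tyass emb \<Gamma> (D0(Suc \<alpha> := k)) (structN (Suc \<alpha>) (liftN 0 L) M0) e"
      and e2: "leqC emb (Prod e (D0 b)) (Prod (Arr k' r) k')"
    proof -
      have IHc: "(\<forall>x. wfD (\<Gamma> x)) \<longrightarrow> (\<forall>a. wfC (D0 a)) \<longrightarrow>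
        (\<forall>\<alpha> d k L. D0 \<alpha> = Prod d k \<longrightarrow> tyass emb \<Gamma> (D0(\<alpha> := k)) L d \<longrightarrow>
          (\<forall>b M. c = Cmd b M \<longrightarrow>
          (\<exists>e. tyass emb \<Gamma> (D0(\<alpha> := k)) (structN \<alpha> L M) e \<and> leqC emb (Prod e (D0 b)) (Prod (Arr k' r) k'))))"
        using T_Mu.IH unfolding D0_def by blast
      show ?thesis using IHc wG wD0 a0 L0 c that by blast
    qed
    obtain k'' where "tyassc emb \<Gamma> (D0(Suc \<alpha> := k))
       (if b = Suc \<alpha> then Cmd b (App (structN (Suc \<alpha>) (liftN 0 L) M0) (liftN 0 L))
        else Cmd b (structN (Suc \<alpha>) (liftN 0 L) M0)) (Prod (Arr k'' r) k'')"
      using struct_step[OF e1 e2 a0 L0] by blast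
    then have "tyassc emb \<Gamma> (case_nat k0 (\<Delta>(\<alpha> := k))) (structNc (Suc \<alpha>) (liftN 0 L) c) (Prod (Arr k'' r) k'')"
      using eq c by simp
    then show "tyass emb \<Gamma> (\<Delta>(\<alpha> := k)) (structN \<alpha> L (Mu c)) (Arr k0 r)"
      using T_Mu.hyps(1) by (simp add: tyass_tyassc.T_Mu)
  qed
next
  case (T_And \<Gamma> \<Delta> M s t)
  then show ?case by (meson tyass_tyassc.T_And)
next
  case (T_Om \<Gamma> \<Delta> M)
  then show ?case by (simp add: tyass_tyassc.T_Om)
next
  case (T_Sub \<Gamma> \<Delta> M s t)
  then show ?case by (meson tyass_tyassc.T_Sub)
next
  case (T_Cmd \<Gamma> \<Delta> M d a)
  show ?case
  proof (intro impI allI)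
    fix \<alpha> d' k L b M' assume wG: "\<forall>x. wfD (\<Gamma> x)" and wD: "\<forall>a. wfC (\<Delta> a)" and a: "\<Delta> \<alpha> = Prod d' k"
      and L: "tyass emb \<Gamma> (\<Delta>(\<alpha> := k)) L d'" and e: "Cmd a M = Cmd b M'"
    have "wfD d" using ty_wf(1)[OF T_Cmd(1) wG wD] .
    then have "leqC emb (Prod d (\<Delta> a)) (Prod d (\<Delta> a))" using wD by (simp add: C_refl)
    moreover have "tyass emb \<Gamma> (\<Delta>(\<alpha> := k)) (structN \<alpha> L M) d" using T_Cmd.IH wG wD a L by blast
    ultimately show "\<exists>e. tyass emb \<Gamma> (\<Delta>(\<alpha> := k)) (structN \<alpha> L M') e \<and> leqC emb (Prod e (\<Delta> b)) (Prod d (\<Delta> a))"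
      using e by auto
  qed
next
  case (TC_And \<Gamma> \<Delta> c s t)
  show ?case
  proof (intro impI allI)
    fix \<alpha> d k L b M assume wG: "\<forall>x. wfD (\<Gamma> x)" and wD: "\<forall>a. wfC (\<Delta> a)" and a: "\<Delta> \<alpha> = Prod d k"
      and L: "tyass emb \<Gamma> (\<Delta>(\<alpha> := k)) L d" and e: "c = Cmd b M"
    have wD': "\<forall>x. wfC ((\<Delta>(\<alpha> := k)) x)" using wD a by (metis fun_upd_apply wfC.simps(1))
    obtain e1 where 1: "tyass emb \<Gamma> (\<Delta>(\<alpha> := k)) (structN \<alpha> L M) e1" "leqC emb (Prod e1 (\<Delta> b)) s"
      using TC_And wG wD a L e by blast
    obtain e2 where 2: "tyass emb \<Gamma> (\<Delta>(\<alpha> := k)) (structN \<alpha> L M) e2" "leqC emb (Prod e2 (\<Delta> b)) t"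
      using TC_And wG wD a L e by blast
    have "leqC emb (Prod (AndD e1 e2) (\<Delta> b)) (AndC s t)"
      using gen_and[OF 1(2) 2(2)] ty_wf(1)[OF 1(1) wG wD'] ty_wf(1)[OF 2(1) wG wD'] wD by blast
    then show "\<exists>e. tyass emb \<Gamma> (\<Delta>(\<alpha> := k)) (structN \<alpha> L M) e \<and> leqC emb (Prod e (\<Delta> b)) (AndC s t)"
      using 1(1) 2(1) tyass_tyassc.T_And by blast
  qed
next
  case (TC_Om \<Gamma> \<Delta> c)
  then show ?case by (meson tyass_tyassc.T_Om gen_om wfD.simps(2))
next
  case (TC_Sub \<Gamma> \<Delta> c s t)
  show ?case
  proof (intro impI allI)
    fix \<alpha> d k L b M assume wG: "\<forall>x. wfD (\<Gamma> x)" and wD: "\<forall>a. wfC (\<Delta> a)" and a: "\<Delta> \<alpha> = Prod d k"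
      and L: "tyass emb \<Gamma> (\<Delta>(\<alpha> := k)) L d" and e: "c = Cmd b M"
    obtain e1 where 1: "tyass emb \<Gamma> (\<Delta>(\<alpha> := k)) (structN \<alpha> L M) e1" "leqC emb (Prod e1 (\<Delta> b)) s"
      using TC_Sub wG wD a L e by blast
    then show "\<exists>e. tyass emb \<Gamma> (\<Delta>(\<alpha> := k)) (structN \<alpha> L M) e \<and> leqC emb (Prod e (\<Delta> b)) t"
      using C_trans[OF 1(2) \<open>leqC emb s t\<close>] by blast
  qed
qed


lemma beta_case:
  fixes emb :: "'k \<Rightarrow> 'a::complete_lattice" and \<Gamma> :: "nat \<Rightarrow> 'k dty" and \<Delta> :: "nat \<Rightarrow> 'k cty"
  shows "tyass emb \<Gamma> \<Delta> X \<delta> \<Longrightarrow> (\<forall>x. wfD (\<Gamma> x)) \<longrightarrow> (\<forall>a. wfC (\<Delta> a)) \<longrightarrow> (\<forall>M N. X = App (Lam M) N \<longrightarrow> tyass emb \<Gamma> \<Delta> (substV 0 N M) \<delta>)"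
    "tyassc emb \<Gamma> \<Delta> c \<tau> \<Longrightarrow> True"
proof (induction rule: tyass_tyassc.inducts)
  case (T_App \<Gamma> \<Delta> M0 d k r N0)
  show ?case
  proof (intro impI allI)
    fix M N assume wG: "\<forall>x. wfD (\<Gamma> x)" and wD: "\<forall>a. wfC (\<Delta> a)" and e: "App M0 N0 = App (Lam M) N"
    have w: "wfD (Arr (Prod d k) r)" using ty_wf(1)[OF T_App(1) wG wD] .
    have "tyass emb (case_nat d \<Gamma>) \<Delta> M (Arr k (fD emb (Arr (Prod d k) r) (Prod d k)))"
      using lam_gen(1)[OF T_App(1)] wG wD e w by auto
    moreover have "leqC emb (Prod d k) (Prod d k)" using w by (simp add: C_refl)
    ultimately have "tyass emb (ins 0 d \<Gamma>) \<Delta> M (Arr k r)" by (simp add: ins0)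
    then show "tyass emb \<Gamma> \<Delta> (substV 0 N M) (Arr k r)"
      using substL(1) T_App(3) e by blast
  qed
next
  case (T_And \<Gamma> \<Delta> M s t) then show ?case using tyass_tyassc.T_And[of emb \<Gamma> \<Delta> _ s t] by blast
next
  case (T_Om \<Gamma> \<Delta> M) then show ?case using tyass_tyassc.T_Om by blast
next
  case (T_Sub \<Gamma> \<Delta> M s t) then show ?case using tyass_tyassc.T_Sub[of emb \<Gamma> \<Delta> _ s t] by blast
qed auto

lemma mu_case:
  fixes emb :: "'k \<Rightarrow> 'a::complete_lattice" and \<Gamma> :: "nat \<Rightarrow> 'k dty" and \<Delta> :: "nat \<Rightarrow> 'k cty"
  shows "tyass emb \<Gamma> \<Delta> X \<delta> \<Longrightarrow> (\<forall>x. wfD (\<Gamma> x)) \<longrightarrow> (\<forall>a. wfC (\<Delta> a)) \<longrightarrow> (\<forall>c N. X = App (Mu c) N \<longrightarrow> tyass emb \<Gamma> \<Delta> (Mu (structNc 0 (liftN 0 N) c)) \<delta>)"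
    "tyassc emb \<Gamma> \<Delta> c \<tau> \<Longrightarrow> True"
proof (induction rule: tyass_tyassc.inducts)
  case (T_App \<Gamma> \<Delta> M0 d k r N0)
  show ?case
  proof (intro impI allI)
    fix c N assume wG: "\<forall>x. wfD (\<Gamma> x)" and wD: "\<forall>a. wfC (\<Delta> a)" and e: "App M0 N0 = App (Mu c) N"
    have w: "wfD (Arr (Prod d k) r)" using ty_wf(1)[OF T_App(1) wG wD] .
    then have wk: "wfC k" and wP: "wfC (Prod d k)" by simp_all
    have "leqC emb (Prod d k) (Prod d k)" using w by (simp add: C_refl)
      moreover have "\<exists>k'. tyassc emb \<Gamma> (case_nat (Prod d k) \<Delta>) c (Prod (Arr k' (fD emb (Arr (Prod d k) r) (Prod d k))) k')"
      using mu_gen(1)[OF T_App(1)] wG wD e wP by blast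
    ultimately obtain k' where ck: "tyassc emb \<Gamma> (case_nat (Prod d k) \<Delta>) c (Prod (Arr k' r) k')"
      by auto
    define D0 where "D0 = case_nat (Prod d k) \<Delta>"
    have wD0: "\<forall>x. wfC (D0 x)" using wD wP by (simp add: D0_def split: nat.split)
    have a0: "D0 0 = Prod d k" by (simp add: D0_def)
    have eq: "D0(0 := k) = case_nat k \<Delta>" by (rule ext) (simp add: D0_def split: nat.split)
    have L0: "tyass emb \<Gamma> (D0(0 := k)) (liftN 0 N) d"
      using weakN(1)[of emb \<Gamma> \<Delta> N d] T_App(3) e eq by (metis ins0 trm.inject(3))
    obtain b M1 where c: "c = Cmd b M1" by (cases c)
    obtain e' where e1: "tyass emb \<Gamma> (D0(0 := k)) (structN 0 (liftN 0 N) M1) e'"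
      and e2: "leqC emb (Prod e' (D0 b)) (Prod (Arr k' r) k')"
      using structL(2)[OF ck] wG wD0 a0 L0 c unfolding D0_def by blast
    obtain k'' where "tyassc emb \<Gamma> (D0(0 := k))
       (if b = 0 then Cmd b (App (structN 0 (liftN 0 N) M1) (liftN 0 N))
        else Cmd b (structN 0 (liftN 0 N) M1)) (Prod (Arr k'' r) k'')"
      using struct_step[OF e1 e2 a0 L0] by blast
    then have "tyassc emb \<Gamma> (case_nat k \<Delta>) (structNc 0 (liftN 0 N) c) (Prod (Arr k'' r) k'')"
      using eq c by simp
    then show "tyass emb \<Gamma> \<Delta> (Mu (structNc 0 (liftN 0 N) c)) (Arr k r)"
      using wk by (simp add: tyass_tyassc.T_Mu)
  qed
next
  case (T_And \<Gamma> \<Delta> M s t) then show ?case using tyass_tyassc.T_And[of emb \<Gamma> \<Delta> _ s t] by blast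
next
  case (T_Om \<Gamma> \<Delta> M) then show ?case using tyass_tyassc.T_Om by blast
next
  case (T_Sub \<Gamma> \<Delta> M s t) then show ?case using tyass_tyassc.T_Sub[of emb \<Gamma> \<Delta> _ s t] by blast
qed auto

lemma lam_case:
  fixes emb :: "'k \<Rightarrow> 'a::complete_lattice" and \<Gamma> :: "nat \<Rightarrow> 'k dty" and \<Delta> :: "nat \<Rightarrow> 'k cty"
  assumes IH0: "\<forall>\<Gamma> \<Delta> \<delta>. (\<forall>x. wfD (\<Gamma> x)) \<longrightarrow> (\<forall>a. wfC (\<Delta> a)) \<longrightarrow> tyass emb \<Gamma> \<Delta> M \<delta> \<longrightarrow> tyass emb \<Gamma> \<Delta> M' \<delta>"
  shows "tyass emb \<Gamma> \<Delta> X \<delta> \<Longrightarrow> (\<forall>x. wfD (\<Gamma> x)) \<longrightarrow> (\<forall>a. wfC (\<Delta> a)) \<longrightarrow> (X = Lam M \<longrightarrow> tyass emb \<Gamma> \<Delta> (Lam M') \<delta>)"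
    "tyassc emb \<Gamma> \<Delta> c \<tau> \<Longrightarrow> True"
proof (induction rule: tyass_tyassc.inducts)
  case (T_Abs d \<Gamma> \<Delta> M0 k r)
  show ?case
  proof (intro impI)
    assume wG: "\<forall>x. wfD (\<Gamma> x)" and wD: "\<forall>a. wfC (\<Delta> a)" and e: "Lam M0 = Lam M"
    have wG0: "\<forall>x. wfD (case_nat d \<Gamma> x)" using wG T_Abs(1) by (simp split: nat.split)
    have "tyass emb (case_nat d \<Gamma>) \<Delta> M' (Arr k r)" using IH0 wG0 wD T_Abs(2) e by blast
    then show "tyass emb \<Gamma> \<Delta> (Lam M') (Arr (Prod d k) r)" using T_Abs(1) tyass_tyassc.T_Abs by blast
  qed
next
  case (T_And \<Gamma> \<Delta> M s t) then show ?case using tyass_tyassc.T_And[of emb \<Gamma> \<Delta> _ s t] by blast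
next
  case (T_Om \<Gamma> \<Delta> M) then show ?case using tyass_tyassc.T_Om by blast
next
  case (T_Sub \<Gamma> \<Delta> M s t) then show ?case using tyass_tyassc.T_Sub[of emb \<Gamma> \<Delta> _ s t] by blast
qed auto

lemma appL_case:
  fixes emb :: "'k \<Rightarrow> 'a::complete_lattice" and \<Gamma> :: "nat \<Rightarrow> 'k dty" and \<Delta> :: "nat \<Rightarrow> 'k cty"
  assumes IH0: "\<forall>\<Gamma> \<Delta> \<delta>. (\<forall>x. wfD (\<Gamma> x)) \<longrightarrow> (\<forall>a. wfC (\<Delta> a)) \<longrightarrow> tyass emb \<Gamma> \<Delta> M \<delta> \<longrightarrow> tyass emb \<Gamma> \<Delta> M' \<delta>"
  shows "tyass emb \<Gamma> \<Delta> X \<delta> \<Longrightarrow> (\<forall>x. wfD (\<Gamma> x)) \<longrightarrow> (\<forall>a. wfC (\<Delta> a)) \<longrightarrow> (X = App M N \<longrightarrow> tyass emb \<Gamma> \<Delta> (App M' N) \<delta>)"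
    "tyassc emb \<Gamma> \<Delta> c \<tau> \<Longrightarrow> True"
proof (induction rule: tyass_tyassc.inducts)
  case (T_App \<Gamma> \<Delta> M0 d k r N0)
  show ?case
  proof (intro impI)
    assume wG: "\<forall>x. wfD (\<Gamma> x)" and wD: "\<forall>a. wfC (\<Delta> a)" and e: "App M0 N0 = App M N"
    have "tyass emb \<Gamma> \<Delta> M0 (Arr (Prod d k) r)" "tyass emb \<Gamma> \<Delta> N0 d" by fact+
    then have "tyass emb \<Gamma> \<Delta> M' (Arr (Prod d k) r)" "tyass emb \<Gamma> \<Delta> N d"
      using IH0 wG wD e by auto
    then show "tyass emb \<Gamma> \<Delta> (App M' N) (Arr k r)" by (rule tyass_tyassc.T_App)
  qed
next
  case (T_And \<Gamma> \<Delta> M s t) then show ?case using tyass_tyassc.T_And[of emb \<Gamma> \<Delta> _ s t] by blast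
next
  case (T_Om \<Gamma> \<Delta> M) then show ?case using tyass_tyassc.T_Om by blast
next
  case (T_Sub \<Gamma> \<Delta> M s t) then show ?case using tyass_tyassc.T_Sub[of emb \<Gamma> \<Delta> _ s t] by blast
qed auto

lemma appR_case:
  fixes emb :: "'k \<Rightarrow> 'a::complete_lattice" and \<Gamma> :: "nat \<Rightarrow> 'k dty" and \<Delta> :: "nat \<Rightarrow> 'k cty"
  assumes IH0: "\<forall>\<Gamma> \<Delta> \<delta>. (\<forall>x. wfD (\<Gamma> x)) \<longrightarrow> (\<forall>a. wfC (\<Delta> a)) \<longrightarrow> tyass emb \<Gamma> \<Delta> N \<delta> \<longrightarrow> tyass emb \<Gamma> \<Delta> N' \<delta>"
  shows "tyass emb \<Gamma> \<Delta> X \<delta> \<Longrightarrow> (\<forall>x. wfD (\<Gamma> x)) \<longrightarrow> (\<forall>a. wfC (\<Delta> a)) \<longrightarrow> (X = App M N \<longrightarrow> tyass emb \<Gamma> \<Delta> (App M N') \<delta>)"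
    "tyassc emb \<Gamma> \<Delta> c \<tau> \<Longrightarrow> True"
proof (induction rule: tyass_tyassc.inducts)
  case (T_App \<Gamma> \<Delta> M0 d k r N0)
  show ?case
  proof (intro impI)
    assume wG: "\<forall>x. wfD (\<Gamma> x)" and wD: "\<forall>a. wfC (\<Delta> a)" and e: "App M0 N0 = App M N"
    have "tyass emb \<Gamma> \<Delta> M0 (Arr (Prod d k) r)" "tyass emb \<Gamma> \<Delta> N0 d" by fact+
    then have "tyass emb \<Gamma> \<Delta> M (Arr (Prod d k) r)" "tyass emb \<Gamma> \<Delta> N' d"
      using IH0 wG wD e by auto
    then show "tyass emb \<Gamma> \<Delta> (App M N') (Arr k r)" by (rule tyass_tyassc.T_App)
  qed
next
  case (T_And \<Gamma> \<Delta> M s t) then show ?case using tyass_tyassc.T_And[of emb \<Gamma> \<Delta> _ s t] by blast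
next
  case (T_Om \<Gamma> \<Delta> M) then show ?case using tyass_tyassc.T_Om by blast
next
  case (T_Sub \<Gamma> \<Delta> M s t) then show ?case using tyass_tyassc.T_Sub[of emb \<Gamma> \<Delta> _ s t] by blast
qed auto

lemma muC_case:
  fixes emb :: "'k \<Rightarrow> 'a::complete_lattice" and \<Gamma> :: "nat \<Rightarrow> 'k dty" and \<Delta> :: "nat \<Rightarrow> 'k cty"
  assumes IH0: "\<forall>\<Gamma> \<Delta> \<rho> k'. (\<forall>x. wfD (\<Gamma> x)) \<longrightarrow> (\<forall>a. wfC (\<Delta> a)) \<longrightarrow>
     tyassc emb \<Gamma> \<Delta> c (Prod (Arr k' \<rho>) k') \<longrightarrow> (\<exists>k''. tyassc emb \<Gamma> \<Delta> c' (Prod (Arr k'' \<rho>) k''))"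
  shows "tyass emb \<Gamma> \<Delta> X \<delta> \<Longrightarrow> (\<forall>x. wfD (\<Gamma> x)) \<longrightarrow> (\<forall>a. wfC (\<Delta> a)) \<longrightarrow> (X = Mu c \<longrightarrow> tyass emb \<Gamma> \<Delta> (Mu c') \<delta>)"
    "tyassc emb \<Gamma> \<Delta> c0 \<tau> \<Longrightarrow> True"
proof (induction rule: tyass_tyassc.inducts)
  case (T_Mu k \<Gamma> \<Delta> c0 k' r)
  show ?case
  proof (intro impI)
    assume wG: "\<forall>x. wfD (\<Gamma> x)" and wD: "\<forall>a. wfC (\<Delta> a)" and e: "Mu c0 = Mu c"
    have wD0: "\<forall>x. wfC (case_nat k \<Delta> x)" using wD T_Mu(1) by (simp split: nat.split)
    obtain k'' where "tyassc emb \<Gamma> (case_nat k \<Delta>) c' (Prod (Arr k'' r) k'')"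
      using IH0 wG wD0 T_Mu(2) e by blast
    then show "tyass emb \<Gamma> \<Delta> (Mu c') (Arr k r)" using T_Mu(1) by (simp add: tyass_tyassc.T_Mu)
  qed
next
  case (T_And \<Gamma> \<Delta> M s t) then show ?case using tyass_tyassc.T_And[of emb \<Gamma> \<Delta> _ s t] by blast
next
  case (T_Om \<Gamma> \<Delta> M) then show ?case using tyass_tyassc.T_Om by blast
next
  case (T_Sub \<Gamma> \<Delta> M s t) then show ?case using tyass_tyassc.T_Sub[of emb \<Gamma> \<Delta> _ s t] by blast
qed auto

lemma ren_case:
  fixes emb :: "'k \<Rightarrow> 'a::complete_lattice" and \<Gamma> :: "nat \<Rightarrow> 'k dty" and \<Delta> :: "nat \<Rightarrow> 'k cty"
  assumes wG: "\<forall>x. wfD (\<Gamma> x)" and wD: "\<forall>a. wfC (\<Delta> a)"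
    and h: "tyassc emb \<Gamma> \<Delta> (Cmd a (Mu c)) (Prod (Arr k' \<rho>) k')"
  shows "\<exists>k''. tyassc emb \<Gamma> \<Delta> (renNc 0 a c) (Prod (Arr k'' \<rho>) k'')"
proof -
  obtain e where e1: "tyass emb \<Gamma> \<Delta> (Mu c) e" and e2: "leqC emb (Prod e (\<Delta> a)) (Prod (Arr k' \<rho>) k')"
    using cmd_gen(2)[OF h] wG wD by blast
  have le1: "leqD emb e (Arr k' \<rho>)" and le2: "leqC emb (\<Delta> a) k'" using prod_inv[OF e2] by blast+
  have wA: "wfD (Arr k' \<rho>)" using leq_wf(1)[OF le1] by blast
  have "leqD emb (Arr k' \<rho>) (Arr (\<Delta> a) \<rho>)" using wA le2 by (simp add: D_arr R_refl)
  then have m: "tyass emb \<Gamma> \<Delta> (Mu c) (Arr (\<Delta> a) \<rho>)" using T_Sub[OF e1 D_trans[OF le1]] by blast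
  have "leqC emb (\<Delta> a) (\<Delta> a)" using wD by (simp add: C_refl)
  moreover have "\<exists>k''. tyassc emb \<Gamma> (case_nat (\<Delta> a) \<Delta>) c (Prod (Arr k'' (fD emb (Arr (\<Delta> a) \<rho>) (\<Delta> a))) k'')"
    using mu_gen(1)[OF m] wG wD by blast
  ultimately obtain k'' where ck: "tyassc emb \<Gamma> (case_nat (\<Delta> a) \<Delta>) c (Prod (Arr k'' \<rho>) k'')"
    by auto
  have "tyassc emb \<Gamma> (ins 0 (\<Delta> a) \<Delta>) c (Prod (Arr k'' \<rho>) k'')" using ck by (simp add: ins0)
  then show ?thesis using renL(2) by blast
qed

lemma cmdC_case:
  fixes emb :: "'k \<Rightarrow> 'a::complete_lattice" and \<Gamma> :: "nat \<Rightarrow> 'k dty" and \<Delta> :: "nat \<Rightarrow> 'k cty"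
  assumes IH0: "\<forall>\<Gamma> \<Delta> \<delta>. (\<forall>x. wfD (\<Gamma> x)) \<longrightarrow> (\<forall>a. wfC (\<Delta> a)) \<longrightarrow> tyass emb \<Gamma> \<Delta> M \<delta> \<longrightarrow> tyass emb \<Gamma> \<Delta> M' \<delta>"
    and wG: "\<forall>x. wfD (\<Gamma> x)" and wD: "\<forall>a. wfC (\<Delta> a)"
    and h: "tyassc emb \<Gamma> \<Delta> (Cmd a M) (Prod (Arr k' \<rho>) k')"
  shows "\<exists>k''. tyassc emb \<Gamma> \<Delta> (Cmd a M') (Prod (Arr k'' \<rho>) k'')"
proof -
  obtain e where e1: "tyass emb \<Gamma> \<Delta> M e" and e2: "leqC emb (Prod e (\<Delta> a)) (Prod (Arr k' \<rho>) k')"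
    using cmd_gen(2)[OF h] wG wD by blast
  have M': "tyass emb \<Gamma> \<Delta> M' e" using IH0 wG wD e1 by blast
  show ?thesis using TC_Sub[OF T_Cmd[OF M', of a] e2] by blast
qed

lemma SR:
  fixes emb :: "'k \<Rightarrow> 'a::complete_lattice" and \<Gamma> :: "nat \<Rightarrow> 'k dty" and \<Delta> :: "nat \<Rightarrow> 'k cty"
  shows "red M N \<Longrightarrow> (\<And>\<Gamma> \<Delta> \<delta>. (\<forall>x. wfD (\<Gamma> x)) \<Longrightarrow> (\<forall>a. wfC (\<Delta> a)) \<Longrightarrow>
       tyass emb \<Gamma> \<Delta> M \<delta> \<Longrightarrow> tyass emb \<Gamma> \<Delta> N \<delta>)"
  "redc c c' \<Longrightarrow> (\<And>\<Gamma> \<Delta> \<rho> k'. (\<forall>x. wfD (\<Gamma> x)) \<Longrightarrow> (\<forall>a. wfC (\<Delta> a)) \<Longrightarrow>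
     tyassc emb \<Gamma> \<Delta> c (Prod (Arr k' \<rho>) k') \<Longrightarrow> \<exists>k''. tyassc emb \<Gamma> \<Delta> c' (Prod (Arr k'' \<rho>) k''))"
proof (induction arbitrary: \<Gamma> \<Delta> \<delta> and \<Gamma> \<Delta> \<rho> k' rule: red_redc.inducts)
  case (beta M N) show ?case using beta_case(1)[OF beta.prems(3)] beta.prems(1,2) by simp
next
  case (mu c N) show ?case using mu_case(1)[OF mu.prems(3)] mu.prems(1,2) by simp
next
  case (ren a c) show ?case using ren_case[OF ren.prems] .
next
  case (lam M M')
  have IHf: "\<forall>\<Gamma> \<Delta> \<delta>. (\<forall>x. wfD (\<Gamma> x)) \<longrightarrow> (\<forall>a. wfC (\<Delta> a)) \<longrightarrow> tyass emb \<Gamma> \<Delta> M \<delta> \<longrightarrow> tyass emb \<Gamma> \<Delta> M' \<delta>"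
    using lam.IH by blast
  show ?case using lam_case(1)[OF IHf lam.prems(3)] lam.prems(1,2) by simp
next
  case (appL M M' N)
  have IHf: "\<forall>\<Gamma> \<Delta> \<delta>. (\<forall>x. wfD (\<Gamma> x)) \<longrightarrow> (\<forall>a. wfC (\<Delta> a)) \<longrightarrow> tyass emb \<Gamma> \<Delta> M \<delta> \<longrightarrow> tyass emb \<Gamma> \<Delta> M' \<delta>"
    using appL.IH by blast
  show ?case using appL_case(1)[OF IHf appL.prems(3)] appL.prems(1,2) by simp
next
  case (appR N N' M)
  have IHf: "\<forall>\<Gamma> \<Delta> \<delta>. (\<forall>x. wfD (\<Gamma> x)) \<longrightarrow> (\<forall>a. wfC (\<Delta> a)) \<longrightarrow> tyass emb \<Gamma> \<Delta> N \<delta> \<longrightarrow> tyass emb \<Gamma> \<Delta> N' \<delta>"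
    using appR.IH by blast
  show ?case using appR_case(1)[OF IHf appR.prems(3)] appR.prems(1,2) by simp
next
  case (muC c c')
  have IHf: "\<forall>\<Gamma> \<Delta> \<rho> k'. (\<forall>x. wfD (\<Gamma> x)) \<longrightarrow> (\<forall>a. wfC (\<Delta> a)) \<longrightarrow>
     tyassc emb \<Gamma> \<Delta> c (Prod (Arr k' \<rho>) k') \<longrightarrow> (\<exists>k''. tyassc emb \<Gamma> \<Delta> c' (Prod (Arr k'' \<rho>) k''))"
    using muC.IH by blast
  show ?case using muC_case(1)[OF IHf muC.prems(3)] muC.prems(1,2) by simp
next
  case (cmdC M M' a)
  have IHf: "\<forall>\<Gamma> \<Delta> \<delta>. (\<forall>x. wfD (\<Gamma> x)) \<longrightarrow> (\<forall>a. wfC (\<Delta> a)) \<longrightarrow> tyass emb \<Gamma> \<Delta> M \<delta> \<longrightarrow> tyass emb \<Gamma> \<Delta> M' \<delta>"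
    using cmdC.IH by blast
  show ?case using cmdC_case[OF IHf cmdC.prems] .
qed

theorem theorem5p4:
  fixes emb :: "'k \<Rightarrow> 'a::complete_lattice"
    and \<Gamma> :: "nat \<Rightarrow> 'k dty" and \<Delta> :: "nat \<Rightarrow> 'k cty"
    and M N :: trm and \<delta> :: "'k dty"
  assumes "omega_algebraic TYPE('a)"
    and "bij_betw emb UNIV {a::'a. compact_el a}"
    and "\<forall>x. wfD (\<Gamma> x)" and "finite {x. \<Gamma> x \<noteq> OmD}"
    and "\<forall>a. wfC (\<Delta> a)" and "finite {a. \<Delta> a \<noteq> OmC}"
    and "wfD \<delta>"
    and "red M N"
    and "tyass emb \<Gamma> \<Delta> M \<delta>"
  shows "tyass emb \<Gamma> \<Delta> N \<delta>"
  using SR(1)[OF assms(8) assms(3) assms(5) assms(9)] .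

end
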